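(* Let $G$ be a simple directed graph on $[n]$ and $\tau\subseteq[n]$ a directed clique of $G$. Then there exists a unique $\sigma\subseteq\tau$ such that $\sigma$ is a target-free clique in $G|_\tau$.
   Context: $\tau$ is a directed clique if its nodes can be ordered $1,\dots,|\tau|$ so that $i\to j$ whenever $i<j$. A clique is a nonempty set of nodes pairwise bidirectionally connected. In $G|_\tau$ (the induced subgraph), a target of $\sigma\subseteq\tau$ is a node $k\in\tau\setminus\sigma$ with $i\to k$ for all $i\in\sigma$; target-free means having no target. *)

theory Defs
  imports Main
begin

(* A simple directed graph on [n] = {1..n}: edge relation E, E i j meaning i -> j,
   no self-loops, all edges between vertices in {1..n}. *)
definition simple_digraph :: "nat \<Rightarrow> (nat \<Rightarrow> nat \<Rightarrow> bool) \<Rightarrow> bool" where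
  "simple_digraph n E \<longleftrightarrow>
     (\<forall>i j. E i j \<longrightarrow> i \<in> {1..n} \<and> j \<in> {1..n} \<and> i \<noteq> j)"

definition directed_clique :: "(nat \<Rightarrow> nat \<Rightarrow> bool) \<Rightarrow> nat set \<Rightarrow> bool" where
  "directed_clique E \<tau> \<longleftrightarrow> finite \<tau> \<and> \<tau> \<noteq> {} \<and>
     (\<exists>f. bij_betw f {1..card \<tau>} \<tau> \<and>
          (\<forall>i\<in>{1..card \<tau>}. \<forall>j\<in>{1..card \<tau>}. i < j \<longrightarrow> E (f i) (f j)))"

definition clique :: "(nat \<Rightarrow> nat \<Rightarrow> bool) \<Rightarrow> nat set \<Rightarrow> bool" where
  "clique E \<sigma> \<longleftrightarrow> \<sigma> \<noteq> {} \<and> (\<forall>i\<in>\<sigma>. \<forall>j\<in>\<sigma>. i \<noteq> j \<longrightarrow> E i j \<and> E j i)"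

(* in G|tau, a target of sigma is k in tau - sigma with i -> k for all i in sigma *)
definition is_target :: "(nat \<Rightarrow> nat \<Rightarrow> bool) \<Rightarrow> nat set \<Rightarrow> nat set \<Rightarrow> nat \<Rightarrow> bool" where
  "is_target E \<tau> \<sigma> k \<longleftrightarrow> k \<in> \<tau> - \<sigma> \<and> (\<forall>i\<in>\<sigma>. E i k)"

definition target_free :: "(nat \<Rightarrow> nat \<Rightarrow> bool) \<Rightarrow> nat set \<Rightarrow> nat set \<Rightarrow> bool" where
  "target_free E \<tau> \<sigma> \<longleftrightarrow> \<not> (\<exists>k. is_target E \<tau> \<sigma> k)"

end

theory Submission
  imports Defs
begin

lemma exist_aux:
  fixes g :: "nat \<Rightarrow> nat"
  assumes "finite T"
  shows "T \<noteq> {} \<longrightarrow> inj_on g T \<longrightarrow> (\<forall>x\<in>T. \<forall>y\<in>T. g x < g y \<longrightarrow> E x y) \<longrightarrow>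
     (\<exists>\<sigma>. \<sigma> \<subseteq> T \<and> clique E \<sigma> \<and> target_free E T \<sigma>)"
  using assms
proof (induction T rule: finite_ranking_induct[where f = "\<lambda>x. - int (g x)"])
  case empty
  then show ?case by simp
next
  case (insert x S)
  show ?case
  proof (intro impI)
    assume ne: "insert x S \<noteq> {}" and inj: "inj_on g (insert x S)"
      and ord: "\<forall>a\<in>insert x S. \<forall>b\<in>insert x S. g a < g b \<longrightarrow> E a b"
    show "\<exists>\<sigma>\<subseteq>insert x S. clique E \<sigma> \<and> target_free E (insert x S) \<sigma>"
    proof (cases "x \<in> S")
      case True
      then have "insert x S = S" by blast
      then show ?thesis using insert ne inj ord by metis
    next
      case xS: False
      have lt: "g x < g y" if "y \<in> S" for y
      proof -
        have "g x \<le> g y" using insert(2)[OF that] by simp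
        moreover have "g x \<noteq> g y" using inj xS that by (metis inj_on_contraD insertCI)
        ultimately show ?thesis by simp
      qed
      show ?thesis
      proof (cases "S = {}")
        case True
        then show ?thesis
          by (intro exI[of _ "{x}"]) (auto simp: clique_def target_free_def is_target_def)
      next
        case False
        have "inj_on g S" using inj by (rule inj_on_subset) blast
        moreover have "\<forall>a\<in>S. \<forall>b\<in>S. g a < g b \<longrightarrow> E a b" using ord by blast
        ultimately obtain \<sigma> where s: "\<sigma> \<subseteq> S" "clique E \<sigma>" "target_free E S \<sigma>"
          using insert(3) False by blast
        show ?thesis
        proof (cases "\<forall>i\<in>\<sigma>. E i x")
          case True
          have "clique E (insert x \<sigma>)"
            using s(1,2) True ord lt unfolding clique_def by (auto 0 4)
          moreover have "target_free E (insert x S) (insert x \<sigma>)"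
            using s(3) unfolding target_free_def is_target_def by auto
          ultimately show ?thesis using s(1) by (intro exI[of _ "insert x \<sigma>"]) auto
        next
          case False
          have "target_free E (insert x S) \<sigma>"
            using s(3) False unfolding target_free_def is_target_def by auto
          then show ?thesis using s by blast
        qed
      qed
    qed
  qed
qed

lemma uniq_half:
  fixes g :: "nat \<Rightarrow> nat"
  assumes inj: "inj_on g T" and ord: "\<forall>x\<in>T. \<forall>y\<in>T. g x < g y \<longrightarrow> E x y"
    and s1: "\<sigma>1 \<subseteq> T" and s2: "\<sigma>2 \<subseteq> T" and c2: "clique E \<sigma>2"
    and t1: "target_free E T \<sigma>1"
    and k: "k \<in> \<sigma>2 - \<sigma>1" and mx: "\<forall>i\<in>\<sigma>1. g k < g i \<longrightarrow> i \<in> \<sigma>2"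
  shows False
proof -
  have "is_target E T \<sigma>1 k"
    unfolding is_target_def
  proof (intro conjI ballI)
    show "k \<in> T - \<sigma>1" using k s2 by blast
    fix i assume i: "i \<in> \<sigma>1"
    have ik: "i \<noteq> k" using i k by blast
    have "g i \<noteq> g k" using inj ik i k s1 s2 by (meson Diff_iff inj_onD subsetD)
    then consider "g i < g k" | "g k < g i" by linarith
    then show "E i k"
    proof cases
      case 1 then show ?thesis using ord i k s1 s2 by blast
    next
      case 2 then have "i \<in> \<sigma>2" using mx i by blast
      then show ?thesis using c2 k ik unfolding clique_def by blast
    qed
  qed
  then show False using t1 unfolding target_free_def by blast
qed

lemma uniq_aux:
  fixes g :: "nat \<Rightarrow> nat"
  assumes fin: "finite T" and inj: "inj_on g T" and ord: "\<forall>x\<in>T. \<forall>y\<in>T. g x < g y \<longrightarrow> E x y"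
    and s1: "\<sigma>1 \<subseteq> T" "clique E \<sigma>1" "target_free E T \<sigma>1"
    and s2: "\<sigma>2 \<subseteq> T" "clique E \<sigma>2" "target_free E T \<sigma>2"
  shows "\<sigma>1 = \<sigma>2"
proof (rule ccontr)
  assume ne: "\<sigma>1 \<noteq> \<sigma>2"
  define D where "D = (\<sigma>1 - \<sigma>2) \<union> (\<sigma>2 - \<sigma>1)"
  have Dne: "D \<noteq> {}" using ne unfolding D_def by blast
  have "finite \<sigma>1" "finite \<sigma>2" using fin s1(1) s2(1) finite_subset by blast+
  then have Df: "finite D" unfolding D_def by simp
  have "Max (g ` D) \<in> g ` D" using Df Dne by simp
  then obtain k where kD: "k \<in> D" and km: "g k = Max (g ` D)" by (metis imageE)
  have mx: "\<forall>d\<in>D. g d \<le> g k" using Df km by simp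
  show False
  proof (cases "k \<in> \<sigma>2 - \<sigma>1")
    case True
    show False
    proof (rule uniq_half[OF inj ord s1(1) s2(1) s2(2) s1(3) True])
      show "\<forall>i\<in>\<sigma>1. g k < g i \<longrightarrow> i \<in> \<sigma>2"
        using mx unfolding D_def by (meson DiffI UnI1 UnI2 not_less)
    qed
  next
    case False
    then have kk: "k \<in> \<sigma>1 - \<sigma>2" using kD unfolding D_def by blast
    show False
    proof (rule uniq_half[OF inj ord s2(1) s1(1) s1(2) s2(3) kk])
      show "\<forall>i\<in>\<sigma>2. g k < g i \<longrightarrow> i \<in> \<sigma>1"
        using mx unfolding D_def by (meson DiffI UnI1 UnI2 not_less)
    qed
  qed
qed

theorem lemma5:
  fixes n :: nat and E :: "nat \<Rightarrow> nat \<Rightarrow> bool" and \<tau> :: "nat set"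
  assumes "simple_digraph n E"
    and "\<tau> \<subseteq> {1..n}"
    and "directed_clique E \<tau>"
  shows "\<exists>!\<sigma>. \<sigma> \<subseteq> \<tau> \<and> clique E \<sigma> \<and> target_free E \<tau> \<sigma>"
proof -
  obtain f where fin: "finite \<tau>" and ne: "\<tau> \<noteq> {}" and bij: "bij_betw f {1..card \<tau>} \<tau>"
    and fo: "\<forall>i\<in>{1..card \<tau>}. \<forall>j\<in>{1..card \<tau>}. i < j \<longrightarrow> E (f i) (f j)"
    using assms(3) unfolding directed_clique_def by (elim conjE exE) simp
  define g where "g = inv_into {1..card \<tau>} f"
  have gb: "bij_betw g \<tau> {1..card \<tau>}" unfolding g_def using bij by (rule bij_betw_inv_into)
  have inj: "inj_on g \<tau>" using gb bij_betw_imp_inj_on by blast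
  have ord: "\<forall>x\<in>\<tau>. \<forall>y\<in>\<tau>. g x < g y \<longrightarrow> E x y"
  proof (intro ballI impI)
    fix x y assume x: "x \<in> \<tau>" and y: "y \<in> \<tau>" and lt: "g x < g y"
    have "g x \<in> {1..card \<tau>}" "g y \<in> {1..card \<tau>}" using bij_betw_apply[OF gb x] bij_betw_apply[OF gb y] by auto
    moreover have "f (g x) = x" "f (g y) = y" unfolding g_def
      using bij_betw_inv_into_right[OF bij x] bij_betw_inv_into_right[OF bij y] by simp_all
    ultimately have "E (f (g x)) (f (g y))" using fo lt by blast
    then show "E x y" using \<open>f (g x) = x\<close> \<open>f (g y) = y\<close> by simp
  qed
  obtain \<sigma> where s: "\<sigma> \<subseteq> \<tau>" "clique E \<sigma>" "target_free E \<tau> \<sigma>"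
    using exist_aux[OF fin, of g E] ne inj ord by (meson ne)
  show ?thesis
  proof (rule ex1I[of _ \<sigma>])
    show "\<sigma> \<subseteq> \<tau> \<and> clique E \<sigma> \<and> target_free E \<tau> \<sigma>" using s by blast
  next
    fix \<sigma>' assume "\<sigma>' \<subseteq> \<tau> \<and> clique E \<sigma>' \<and> target_free E \<tau> \<sigma>'"
    then show "\<sigma>' = \<sigma>" using uniq_aux[OF fin inj ord _ _ _ s] by (elim conjE) simp
  qed
qed

end
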